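(* The graph $L_{6,1}$ has a perfect partition; that is, the set of all $265$ derangements of $\{1,\dots,6\}$ (equivalently, all $6\times 6$ permutation matrices with zero diagonal) can be partitioned into subsets each of which consists of $5$ permutation matrices summing to $J_6-I_6$.
   Context: $L_{n,1}=K_{n,n}-nK_{1,1}$ is the complete bipartite graph $K_{n,n}$ with a perfect matching removed; its biadjacency matrix is $J_n-I_n$, where $J_n$ is the all-ones $n\times n$ matrix. Its perfect matchings correspond exactly to derangements of $\{1,\dots,n\}$ (permutation matrices $P$ with $P\le J_n-I_n$ entrywise). A regular bipartite graph $G$ has a perfect partition if its set of perfect matchings can be partitioned into parts each of which is a $1$-factorization of $G$ (a set of pairwise edge-disjoint perfect matchings whose union is $G$); in matrix language, the set of permutation matrices $P\le A(G)$ can be partitioned into subsets each summing to $A(G)$. *)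

theory Defs
  imports "HOL-Combinatorics.Permutations" "HOL-Library.Disjoint_Sets"
begin

text \<open>Derangements of {1..n}: permutations of {1..n} without fixed points,
  i.e. permutation matrices P with P \<le> J_n - I_n entrywise
  (P has entry (i,j) equal to 1 iff p i = j).\<close>
definition derangements :: "nat \<Rightarrow> (nat \<Rightarrow> nat) set" where
  "derangements n = {p. p permutes {1..n} \<and> (\<forall>i\<in>{1..n}. p i \<noteq> i)}"

definition perm_mat :: "(nat \<Rightarrow> nat) \<Rightarrow> nat \<Rightarrow> nat \<Rightarrow> nat" where
  "perm_mat p i j = (if p i = j then 1 else 0)"

text \<open>Entry (i,j) of the biadjacency matrix J_n - I_n of L_{n,1}.\<close>
definition JmI :: "nat \<Rightarrow> nat \<Rightarrow> nat" where
  "JmI i j = (if i = j then 0 else 1)"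

definition sums_to_JmI :: "nat \<Rightarrow> (nat \<Rightarrow> nat) set \<Rightarrow> bool" where
  "sums_to_JmI n S \<longleftrightarrow> (\<forall>i\<in>{1..n}. \<forall>j\<in>{1..n}. (\<Sum>p\<in>S. perm_mat p i j) = JmI i j)"

text \<open>L_{n,1} has a perfect partition: the set of its perfect matchings
  (derangements) is partitioned into parts each summing to J_n - I_n.\<close>
definition has_perfect_partition_L :: "nat \<Rightarrow> bool" where
  "has_perfect_partition_L n \<longleftrightarrow>
     (\<exists>P. partition_on (derangements n) P \<and> (\<forall>S\<in>P. sums_to_JmI n S))"

end

theory Submission
  imports Defs
begin

definition pl :: "nat list \<Rightarrow> nat \<Rightarrow> nat" where
  "pl xs i = (if 1 \<le> i \<and> i \<le> length xs then xs ! (i - 1) else i)"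

definition validl :: "nat list \<Rightarrow> bool" where
  "validl xs \<longleftrightarrow> length xs = 6 \<and> list_all (\<lambda>x. 1 \<le> x \<and> x \<le> 6) xs \<and> distinct xs
     \<and> list_all (\<lambda>k. xs ! k \<noteq> Suc k) [0..<6]"

definition genc :: "nat list list" where
  "genc = [[a,b,c,d,e,f]. a \<leftarrow> [1..<7], a \<noteq> 1,
     b \<leftarrow> [1..<7], b \<noteq> 2, b \<noteq> a,
     c \<leftarrow> [1..<7], c \<noteq> 3, c \<noteq> a, c \<noteq> b,
     d \<leftarrow> [1..<7], d \<noteq> 4, d \<noteq> a, d \<noteq> b, d \<noteq> c,
     e \<leftarrow> [1..<7], e \<noteq> 5, e \<noteq> a, e \<noteq> b, e \<noteq> c, e \<noteq> d,
     f \<leftarrow> [1..<7], f \<noteq> 6, f \<noteq> a, f \<noteq> b, f \<noteq> c, f \<noteq> d, f \<noteq> e]"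

definition gen :: "nat list list" where
  "gen = [[2,1,4,3,6,5], [2,1,4,5,6,3], [2,1,4,6,3,5], [2,1,5,3,6,4], [2,1,5,6,3,4], [2,1,5,6,4,3], [2,1,6,3,4,5], [2,1,6,5,3,4], [2,1,6,5,4,3], [2,3,1,5,6,4], [2,3,1,6,4,5], [2,3,4,1,6,5], [2,3,4,5,6,1], [2,3,4,6,1,5], [2,3,5,1,6,4], [2,3,5,6,1,4], [2,3,5,6,4,1], [2,3,6,1,4,5], [2,3,6,5,1,4], [2,3,6,5,4,1], [2,4,1,3,6,5], [2,4,1,5,6,3], [2,4,1,6,3,5], [2,4,5,1,6,3], [2,4,5,3,6,1], [2,4,5,6,1,3], [2,4,5,6,3,1], [2,4,6,1,3,5], [2,4,6,3,1,5], [2,4,6,5,1,3], [2,4,6,5,3,1], [2,5,1,3,6,4], [2,5,1,6,3,4], [2,5,1,6,4,3], [2,5,4,1,6,3], [2,5,4,3,6,1], [2,5,4,6,1,3], [2,5,4,6,3,1], [2,5,6,1,3,4], [2,5,6,1,4,3], [2,5,6,3,1,4], [2,5,6,3,4,1], [2,6,1,3,4,5], [2,6,1,5,3,4], [2,6,1,5,4,3], [2,6,4,1,3,5], [2,6,4,3,1,5], [2,6,4,5,1,3], [2,6,4,5,3,1], [2,6,5,1,3,4], [2,6,5,1,4,3], [2,6,5,3,1,4], [2,6,5,3,4,1], [3,1,2,5,6,4], [3,1,2,6,4,5], [3,1,4,2,6,5], [3,1,4,5,6,2], [3,1,4,6,2,5], [3,1,5,2,6,4], [3,1,5,6,2,4],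 [3,1,5,6,4,2], [3,1,6,2,4,5], [3,1,6,5,2,4], [3,1,6,5,4,2], [3,4,1,2,6,5], [3,4,1,5,6,2], [3,4,1,6,2,5], [3,4,2,1,6,5], [3,4,2,5,6,1], [3,4,2,6,1,5], [3,4,5,1,6,2], [3,4,5,2,6,1], [3,4,5,6,1,2], [3,4,5,6,2,1], [3,4,6,1,2,5], [3,4,6,2,1,5], [3,4,6,5,1,2], [3,4,6,5,2,1], [3,5,1,2,6,4], [3,5,1,6,2,4], [3,5,1,6,4,2], [3,5,2,1,6,4], [3,5,2,6,1,4], [3,5,2,6,4,1], [3,5,4,1,6,2], [3,5,4,2,6,1], [3,5,4,6,1,2], [3,5,4,6,2,1], [3,5,6,1,2,4], [3,5,6,1,4,2], [3,5,6,2,1,4], [3,5,6,2,4,1], [3,6,1,2,4,5], [3,6,1,5,2,4], [3,6,1,5,4,2], [3,6,2,1,4,5], [3,6,2,5,1,4], [3,6,2,5,4,1], [3,6,4,1,2,5], [3,6,4,2,1,5], [3,6,4,5,1,2], [3,6,4,5,2,1], [3,6,5,1,2,4], [3,6,5,1,4,2], [3,6,5,2,1,4], [3,6,5,2,4,1], [4,1,2,3,6,5], [4,1,2,5,6,3], [4,1,2,6,3,5], [4,1,5,2,6,3], [4,1,5,3,6,2], [4,1,5,6,2,3], [4,1,5,6,3,2], [4,1,6,2,3,5], [4,1,6,3,2,5], [4,1,6,5,2,3], [4,1,6,5,3,2], [4,3,1,2,6,5], [4,3,1,5,6,2], [4,3,1,6,2,5], [4,3,2,1,6,5], [4,3,2,5,6,1],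 [4,3,2,6,1,5], [4,3,5,1,6,2], [4,3,5,2,6,1], [4,3,5,6,1,2], [4,3,5,6,2,1], [4,3,6,1,2,5], [4,3,6,2,1,5], [4,3,6,5,1,2], [4,3,6,5,2,1], [4,5,1,2,6,3], [4,5,1,3,6,2], [4,5,1,6,2,3], [4,5,1,6,3,2], [4,5,2,1,6,3], [4,5,2,3,6,1], [4,5,2,6,1,3], [4,5,2,6,3,1], [4,5,6,1,2,3], [4,5,6,1,3,2], [4,5,6,2,1,3], [4,5,6,2,3,1], [4,5,6,3,1,2], [4,5,6,3,2,1], [4,6,1,2,3,5], [4,6,1,3,2,5], [4,6,1,5,2,3], [4,6,1,5,3,2], [4,6,2,1,3,5], [4,6,2,3,1,5], [4,6,2,5,1,3], [4,6,2,5,3,1], [4,6,5,1,2,3], [4,6,5,1,3,2], [4,6,5,2,1,3], [4,6,5,2,3,1], [4,6,5,3,1,2], [4,6,5,3,2,1], [5,1,2,3,6,4], [5,1,2,6,3,4], [5,1,2,6,4,3], [5,1,4,2,6,3], [5,1,4,3,6,2], [5,1,4,6,2,3], [5,1,4,6,3,2], [5,1,6,2,3,4], [5,1,6,2,4,3], [5,1,6,3,2,4], [5,1,6,3,4,2], [5,3,1,2,6,4], [5,3,1,6,2,4], [5,3,1,6,4,2], [5,3,2,1,6,4], [5,3,2,6,1,4], [5,3,2,6,4,1], [5,3,4,1,6,2], [5,3,4,2,6,1], [5,3,4,6,1,2], [5,3,4,6,2,1], [5,3,6,1,2,4], [5,3,6,1,4,2], [5,3,6,2,1,4], [5,3,6,2,4,1],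 [5,4,1,2,6,3], [5,4,1,3,6,2], [5,4,1,6,2,3], [5,4,1,6,3,2], [5,4,2,1,6,3], [5,4,2,3,6,1], [5,4,2,6,1,3], [5,4,2,6,3,1], [5,4,6,1,2,3], [5,4,6,1,3,2], [5,4,6,2,1,3], [5,4,6,2,3,1], [5,4,6,3,1,2], [5,4,6,3,2,1], [5,6,1,2,3,4], [5,6,1,2,4,3], [5,6,1,3,2,4], [5,6,1,3,4,2], [5,6,2,1,3,4], [5,6,2,1,4,3], [5,6,2,3,1,4], [5,6,2,3,4,1], [5,6,4,1,2,3], [5,6,4,1,3,2], [5,6,4,2,1,3], [5,6,4,2,3,1], [5,6,4,3,1,2], [5,6,4,3,2,1], [6,1,2,3,4,5], [6,1,2,5,3,4], [6,1,2,5,4,3], [6,1,4,2,3,5], [6,1,4,3,2,5], [6,1,4,5,2,3], [6,1,4,5,3,2], [6,1,5,2,3,4], [6,1,5,2,4,3], [6,1,5,3,2,4], [6,1,5,3,4,2], [6,3,1,2,4,5], [6,3,1,5,2,4], [6,3,1,5,4,2], [6,3,2,1,4,5], [6,3,2,5,1,4], [6,3,2,5,4,1], [6,3,4,1,2,5], [6,3,4,2,1,5], [6,3,4,5,1,2], [6,3,4,5,2,1], [6,3,5,1,2,4], [6,3,5,1,4,2], [6,3,5,2,1,4], [6,3,5,2,4,1], [6,4,1,2,3,5], [6,4,1,3,2,5], [6,4,1,5,2,3], [6,4,1,5,3,2], [6,4,2,1,3,5], [6,4,2,3,1,5], [6,4,2,5,1,3], [6,4,2,5,3,1], [6,4,5,1,2,3],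 [6,4,5,1,3,2], [6,4,5,2,1,3], [6,4,5,2,3,1], [6,4,5,3,1,2], [6,4,5,3,2,1], [6,5,1,2,3,4], [6,5,1,2,4,3], [6,5,1,3,2,4], [6,5,1,3,4,2], [6,5,2,1,3,4], [6,5,2,1,4,3], [6,5,2,3,1,4], [6,5,2,3,4,1], [6,5,4,1,2,3], [6,5,4,1,3,2], [6,5,4,2,1,3], [6,5,4,2,3,1], [6,5,4,3,1,2], [6,5,4,3,2,1]]"

definition own :: "nat list" where
  "own = [34,29,17,32,28,46,4,38,51,22,13,21,0,6,23,41,36,10,43,45,26,1,3,19,39,40,33,49,50,14,25,35,24,16,15,30,2,5,27,12,7,44,31,9,11,20,37,8,18,47,52,42,48,31,22,42,33,43,16,45,15,39,37,23,52,2,51,38,4,35,44,12,27,20,48,46,17,47,8,19,14,13,18,29,25,11,26,9,6,0,21,3,30,10,41,40,34,32,7,36,28,24,1,5,49,50,14,7,8,6,10,25,30,1,11,35,52,5,48,12,9,27,44,24,17,31,38,18,33,19,40,28,47,39,34,50,49,23,37,42,36,32,22,20,41,45,29,21,46,16,0,3,15,26,43,4,2,51,13,36,48,47,41,40,49,50,26,24,5,9,20,4,7,46,11,42,3,51,1,52,2,8,15,34,37,18,0,32,45,43,10,21,30,29,13,31,16,28,44,27,33,6,39,17,25,19,22,35,38,14,12,23,2,12,20,19,27,44,13,0,18,3,21,25,50,49,28,30,26,32,47,39,16,14,37,29,35,23,15,36,42,41,24,5,6,34,11,9,7,22,8,40,43,17,38,51,33,52,1,31,4,48,10,45,46]"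

definition part :: "nat \<Rightarrow> nat list list" where
  "part j = map fst (filter (\<lambda>p. snd p = j) (zip gen own))"

definition enc :: "nat list \<Rightarrow> nat" where
  "enc xs = foldl (\<lambda>a x. 7 * a + x) 0 xs"

definition partsum :: "nat list list \<Rightarrow> bool" where
  "partsum s \<longleftrightarrow> length s = 5 \<and> list_all (\<lambda>i. list_all (\<lambda>j.
      sum_list (map (\<lambda>x. if x ! (i - 1) = j then 1 else 0) s) = (if i = j then 0 else 1::nat))
      [1..<7]) [1..<7]"

lemma chk_gen: "genc = gen"
  by code_simp

lemma chk_enc: "successively (<) (map enc gen)"
  by (simp add: enc_def gen_def)

lemma chk_valid: "list_all validl gen"
  by code_simp

lemma chk_len: "length gen = 265 \<and> length own = 265 \<and> list_all (\<lambda>q. q < 53) own"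
  by code_simp

lemma chk_parts: "list_all partsum (map part [0..<53])"
  by code_simp

lemma validlD:
  assumes "validl xs"
  shows "length xs = 6" "set xs \<subseteq> {1..6}" "distinct xs" "\<And>k. k < 6 \<Longrightarrow> xs ! k \<noteq> Suc k"
  using assms by (auto simp: validl_def list_all_iff)

lemma pl_der: assumes v: "validl xs" shows "pl xs \<in> derangements 6"
proof -
  note d = validlD[OF v]
  let ?S = "{1..6::nat}"
  have inj: "inj_on (pl xs) ?S"
  proof (rule inj_onI)
    fix i j assume i: "i \<in> ?S" and j: "j \<in> ?S" and e: "pl xs i = pl xs j"
    then have "xs ! (i - 1) = xs ! (j - 1)" using d(1) by (simp add: pl_def)
    moreover have "i - 1 < length xs" "j - 1 < length xs" using d(1) i j by auto
    ultimately have "i - 1 = j - 1" using d(3) by (simp add: nth_eq_iff_index_eq)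
    then show "i = j" using i j by (simp, arith)
  qed
  have sub: "pl xs ` ?S \<subseteq> ?S"
  proof
    fix y assume "y \<in> pl xs ` ?S"
    then obtain i where i: "i \<in> ?S" "y = pl xs i" by blast
    then have "y = xs ! (i - 1)" using d(1) by (simp add: pl_def)
    moreover have "xs ! (i - 1) \<in> set xs" using i d(1) by (auto intro!: nth_mem)
    ultimately show "y \<in> ?S" using d(2) by blast
  qed
  have "pl xs ` ?S = ?S" using endo_inj_surj[OF _ sub inj] by simp
  then have bij: "bij_betw (pl xs) ?S ?S" using inj by (simp add: bij_betw_def)
  have perm: "pl xs permutes ?S"
    by (rule bij_imp_permutes[OF bij]) (use d(1) in \<open>auto simp: pl_def\<close>)
  have "\<forall>i\<in>?S. pl xs i \<noteq> i"
  proof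
    fix i assume i: "i \<in> ?S"
    have "i - 1 < 6" using i by auto
    then have "xs ! (i - 1) \<noteq> Suc (i - 1)" using d(4) by blast
    moreover have "Suc (i - 1) = i" using i by auto
    ultimately have "xs ! (i - 1) \<noteq> i" by simp
    then show "pl xs i \<noteq> i" using i d(1) by (simp add: pl_def)
  qed
  then show ?thesis using perm by (simp add: derangements_def)
qed

lemma der_pl:
  assumes p: "p \<in> derangements 6"
  shows "validl (map p [1..<7]) \<and> pl (map p [1..<7]) = p"
proof -
  have perm: "p permutes {1..6}" and nf: "\<forall>i\<in>{1..6}. p i \<noteq> i"
    using p by (auto simp: derangements_def)
  have eq: "pl (map p [1..<7]) = p"
  proof
    fix x show "pl (map p [1..<7]) x = p x"
    proof (cases "x \<in> {1..6}")
      case True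
      then have "x - 1 < length [1..<7::nat]" "[1..<7::nat] ! (x - 1) = x" by auto
      then show ?thesis using True by (simp add: pl_def del: upt_Suc)
    next
      case False then show ?thesis using permutes_not_in[OF perm False] by (auto simp: pl_def)
    qed
  qed
  have "inj p" using permutes_inj[OF perm] .
  then have dist: "distinct (map p [1..<7])" by (simp add: distinct_map inj_on_def)
  have rng: "\<forall>x\<in>set (map p [1..<7]). 1 \<le> x \<and> x \<le> 6"
  proof
    fix x assume "x \<in> set (map p [1..<7])"
    then obtain i where i: "i \<in> set [1..<7]" "x = p i" by (auto simp del: upt_Suc)
    then have "i \<in> {1..6}" by auto
    then show "1 \<le> x \<and> x \<le> 6" using i(2) permutes_in_image[OF perm, of i] by auto
  qed
  have fx: "\<forall>k\<in>set [0..<6]. map p [1..<7] ! k \<noteq> Suc k"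
  proof
    fix k assume "k \<in> set [0..<6]"
    then have k: "k < 6" by simp
    then have "map p [1..<7] ! k = p (Suc k)" by simp
    then show "map p [1..<7] ! k \<noteq> Suc k" using nf k by simp
  qed
  show ?thesis using eq dist rng fx by (simp add: validl_def list_all_iff)
qed

lemma pl_inj: "inj_on pl {xs. validl xs}"
proof (rule inj_onI)
  fix xs ys assume "xs \<in> {xs. validl xs}" "ys \<in> {xs. validl xs}" and e: "pl xs = pl ys"
  then have l: "length xs = 6" "length ys = 6" using validlD by auto
  show "xs = ys"
  proof (rule nth_equalityI)
    show "length xs = length ys" using l by simp
    fix k assume "k < length xs"
    then have "xs ! k = pl xs (Suc k)" "ys ! k = pl ys (Suc k)" using l by (auto simp: pl_def)
    then show "xs ! k = ys ! k" using e by simp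
  qed
qed

lemma len6: "length xs = 6 \<Longrightarrow> \<exists>a b c d e f. xs = [a,b,c,d,e,f]"
  apply (simp add: numeral_eq_Suc length_Suc_conv) by blast

lemma validl_gen: "validl xs \<Longrightarrow> xs \<in> set gen"
proof -
  assume v: "validl xs"
  then have l: "length xs = 6" by (simp add: validl_def)
  then obtain a b c d e f where xs: "xs = [a,b,c,d,e,f]" using len6 by blast
  have "\<forall>k<6. xs ! k \<noteq> Suc k" using validlD(4)[OF v] by blast
  then have nf: "a \<noteq> 1" "b \<noteq> 2" "c \<noteq> 3" "d \<noteq> 4" "e \<noteq> 5" "f \<noteq> 6"
    unfolding xs by (auto dest: spec[of _ 0] spec[of _ 1] spec[of _ 2] spec[of _ 3] spec[of _ 4] spec[of _ 5])
  have r: "a \<in> set [1..<7]" "b \<in> set [1..<7]" "c \<in> set [1..<7]" "d \<in> set [1..<7]" "e \<in> set [1..<7]" "f \<in> set [1..<7]"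
    using validlD(2)[OF v] unfolding xs by auto
  have ds: "distinct [a,b,c,d,e,f]" using validlD(3)[OF v] unfolding xs by auto
  have "xs \<in> set genc" unfolding xs genc_def
    using nf r ds
    apply (simp del: upt_Suc) by blast
  then show ?thesis using chk_gen by simp
qed

lemma gen_distinct: "distinct gen"
proof -
  have "sorted_wrt (<) (map enc gen)"
    using chk_enc successively_conv_sorted_wrt[of "(<) :: nat \<Rightarrow> nat \<Rightarrow> bool"] by (simp add: transp_on_def)
  then have "distinct (map enc gen)" by (simp add: strict_sorted_iff)
  then show ?thesis by (simp add: distinct_map)
qed

lemma gen_valid: "x \<in> set gen \<Longrightarrow> validl x"
  using chk_valid by (simp add: list_all_iff)

lemma der_eq: "derangements 6 = pl ` set gen"
proof
  show "derangements 6 \<subseteq> pl ` set gen"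
  proof
    fix p assume "p \<in> derangements 6"
    from der_pl[OF this] have "validl (map p [1..<7])" "pl (map p [1..<7]) = p" by auto
    then show "p \<in> pl ` set gen" using validl_gen by (metis image_eqI)
  qed
  show "pl ` set gen \<subseteq> derangements 6" using gen_valid pl_der by blast
qed

lemma inj_gen: "inj_on pl (set gen)"
  using pl_inj gen_valid by (meson inj_on_subset mem_Collect_eq subsetI)

lemma zip_uniq:
  assumes "distinct xs" "(x, a) \<in> set (zip xs ys)" "(x, b) \<in> set (zip xs ys)"
  shows "a = b"
proof -
  obtain i where i: "i < min (length xs) (length ys)" "x = xs ! i" "a = ys ! i"
    using assms(2) by (auto simp: set_zip)
  obtain k where k: "k < min (length xs) (length ys)" "x = xs ! k" "b = ys ! k"
    using assms(3) by (auto simp: set_zip)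
  have "i = k" using i k assms(1) by (simp add: nth_eq_iff_index_eq)
  then show ?thesis using i k by simp
qed

lemma part_sub: "set (part j) \<subseteq> set gen"
  by (auto simp: part_def dest: set_zip_leftD)

lemma part_distinct: "distinct (part j)"
proof -
  have "distinct (map fst (zip gen own))" using gen_distinct by (simp add: map_fst_zip_take)
  then show ?thesis unfolding part_def by (rule distinct_map_filter)
qed

lemma part_partsum: "j < 53 \<Longrightarrow> partsum (part j)"
  using chk_parts by (auto simp: list_all_iff)

lemma gen_cover: "x \<in> set gen \<Longrightarrow> \<exists>j<53. x \<in> set (part j)"
proof -
  assume "x \<in> set gen"
  then obtain k where k: "k < length gen" "x = gen ! k" by (auto simp: in_set_conv_nth)
  have l: "length gen = 265" "length own = 265" "\<forall>q\<in>set own. q < 53"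
    using chk_len by (auto simp: list_all_iff)
  have "(x, own ! k) \<in> set (zip gen own)" using k l by (auto simp: set_zip)
  then have "x \<in> set (part (own ! k))" by (force simp: part_def)
  moreover have "own ! k < 53" using l k by auto
  ultimately show ?thesis by blast
qed

lemma L_card: "card (derangements 6) = 265"
proof -
  have l: "length gen = 265" using chk_len by simp
  show ?thesis
    using der_eq card_image[OF inj_gen] distinct_card[OF gen_distinct] l by simp
qed

lemma injp: "inj_on pl (set (part j))"
  using inj_gen part_sub inj_on_subset by blast

lemma L_card5: "j < 53 \<Longrightarrow> card (pl ` set (part j)) = 5"
proof -
  assume j: "j < 53"
  have "card (pl ` set (part j)) = length (part j)"
    using card_image[OF injp] distinct_card[OF part_distinct] by simp
  then show ?thesis using part_partsum[OF j] by (simp add: partsum_def)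
qed

lemma L_sums: "j < 53 \<Longrightarrow> sums_to_JmI 6 (pl ` set (part j))"
  unfolding sums_to_JmI_def
proof (intro ballI)
  fix i jj assume j: "j < 53" and i: "i \<in> {1..6::nat}" and jj: "jj \<in> {1..6::nat}"
  have "(\<Sum>p\<in>pl ` set (part j). perm_mat p i jj) = (\<Sum>x\<in>set (part j). perm_mat (pl x) i jj)"
    using sum.reindex[OF injp, of "\<lambda>p. perm_mat p i jj"] by (simp add: comp_def)
  also have "\<dots> = sum_list (map (\<lambda>x. perm_mat (pl x) i jj) (part j))"
    by (rule sum_list_distinct_conv_sum_set[OF part_distinct, symmetric])
  also have "map (\<lambda>x. perm_mat (pl x) i jj) (part j) = map (\<lambda>x. if x ! (i - 1) = jj then 1 else 0) (part j)"
  proof (rule map_cong[OF refl])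
    fix x assume "x \<in> set (part j)"
    then have "length x = 6" using part_sub gen_valid validlD(1) by blast
    then show "perm_mat (pl x) i jj = (if x ! (i - 1) = jj then 1 else 0)"
      using i by (simp add: perm_mat_def pl_def)
  qed
  also have "sum_list (map (\<lambda>x. if x ! (i - 1) = jj then 1 else 0) (part j)) = JmI i jj"
  proof -
    have "i \<in> set [1..<7]" "jj \<in> set [1..<7]" using i jj by auto
    then show ?thesis using part_partsum[OF j] unfolding partsum_def list_all_iff JmI_def
      by blast
  qed
  finally show "(\<Sum>p\<in>pl ` set (part j). perm_mat p i jj) = JmI i jj" .
qed

lemma L_union: "\<Union> ((\<lambda>j. pl ` set (part j)) ` {0..<53}) = derangements 6"
proof
  have "\<Union> ((\<lambda>j. pl ` set (part j)) ` {0..<53}) \<subseteq> pl ` set gen"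
    using part_sub by (simp add: UN_subset_iff image_mono)
  then show "\<Union> ((\<lambda>j. pl ` set (part j)) ` {0..<53}) \<subseteq> derangements 6" using der_eq by simp
  show "derangements 6 \<subseteq> \<Union> ((\<lambda>j. pl ` set (part j)) ` {0..<53})"
  proof
    fix p assume "p \<in> derangements 6"
    then obtain x where x: "x \<in> set gen" "p = pl x" using der_eq by auto
    then obtain j where "j < 53" "x \<in> set (part j)" using gen_cover by blast
    then show "p \<in> \<Union> ((\<lambda>j. pl ` set (part j)) ` {0..<53})" using x by auto
  qed
qed

lemma L_disj: "disjoint ((\<lambda>j. pl ` set (part j)) ` {0..<53})"
  unfolding disjoint_def
proof (intro ballI impI)
  fix A B assume A: "A \<in> (\<lambda>j. pl ` set (part j)) ` {0..<53}" and B: "B \<in> (\<lambda>j. pl ` set (part j)) ` {0..<53}"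
    and ne: "A \<noteq> B"
  obtain a where a: "A = pl ` set (part a)" using A by (rule imageE)
  obtain b where b: "B = pl ` set (part b)" using B by (rule imageE)
  show "A \<inter> B = {}"
  proof (rule ccontr)
    assume "A \<inter> B \<noteq> {}"
    then obtain z where z: "z \<in> A" "z \<in> B" by blast
    obtain x where x: "x \<in> set (part a)" "z = pl x" using z(1) unfolding a by (rule imageE)
    obtain y where y: "y \<in> set (part b)" "z = pl y" using z(2) unfolding b by (rule imageE)
    have xg: "x \<in> set gen" and yg: "y \<in> set gen" using x(1) y(1) part_sub by blast+
    have "x = y" using inj_onD[OF inj_gen _ xg yg] x(2) y(2) by simp
    have xa: "(x, a) \<in> set (zip gen own)" using x(1) unfolding part_def by auto
    have xb: "(x, b) \<in> set (zip gen own)" using y(1) \<open>x = y\<close> unfolding part_def by auto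
    have "a = b" by (rule zip_uniq[OF gen_distinct xa xb])
    then have "A = B" unfolding a b by (rule arg_cong)
    with ne show False by contradiction
  qed
qed

lemma L_ne: "{} \<notin> (\<lambda>j. pl ` set (part j)) ` {0..<53}"
proof
  assume "{} \<in> (\<lambda>j. pl ` set (part j)) ` {0..<53}"
  then obtain j where j: "j < 53" "{} = pl ` set (part j)" by auto
  have "card (pl ` set (part j)) = 5" using L_card5[OF j(1)] .
  then show False using j(2) by simp
qed

theorem theorem2p1:
  shows "card (derangements 6) = 265 \<and>
         (\<exists>P. partition_on (derangements 6) P \<and>
              (\<forall>S\<in>P. card S = 5 \<and> sums_to_JmI 6 S))"
proof -
  let ?P = "(\<lambda>j. pl ` set (part j)) ` {0..<53}"
  have "partition_on (derangements 6) ?P"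
    unfolding partition_on_def using L_union L_disj L_ne by blast
  moreover have "\<forall>S\<in>?P. card S = 5 \<and> sums_to_JmI 6 S" using L_card5 L_sums by auto
  ultimately show ?thesis using L_card by blast
qed

end
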